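(* Let $K$ be a commutative Noetherian ring with $1$, let $A$ be a $K$-algebra, and let $B$ be a $K$-subalgebra of $A$ such that $A/B$ is a finitely generated $K$-module. Then $B$ contains an ideal $I$ of $A$ such that $B/I$ is a finitely generated $K$-module (and hence $A/I$ is a finitely generated $K$-module as well).
   Context: A $K$-algebra is a structure that is simultaneously an associative ring (not necessarily with identity) and a $K$-module, with $K$-bilinear multiplication. *)

theory Defs
  imports Complex_Main
begin

definition noetherian_ring :: "'k::comm_ring_1 itself \<Rightarrow> bool" where
  "noetherian_ring _ \<longleftrightarrow>
     (\<forall>J::'k set. module.subspace (*) J \<longrightarrow> (\<exists>F. finite F \<and> module.span (*) F = J))"

text \<open>A K-algebra: an associative (not necessarily unital) ring A together with a
  K-module structure whose multiplication is K-bilinear.\<close>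
definition k_algebra :: "('k::comm_ring_1 \<Rightarrow> 'a::ring \<Rightarrow> 'a) \<Rightarrow> bool" where
  "k_algebra smul \<longleftrightarrow> module smul \<and>
     (\<forall>c x y. smul c (x * y) = smul c x * y \<and> smul c (x * y) = x * smul c y)"

definition k_subalgebra :: "('k::comm_ring_1 \<Rightarrow> 'a::ring \<Rightarrow> 'a) \<Rightarrow> 'a set \<Rightarrow> bool" where
  "k_subalgebra smul B \<longleftrightarrow> module.subspace smul B \<and> (\<forall>x\<in>B. \<forall>y\<in>B. x * y \<in> B)"

definition k_alg_ideal :: "('k::comm_ring_1 \<Rightarrow> 'a::ring \<Rightarrow> 'a) \<Rightarrow> 'a set \<Rightarrow> bool" where
  "k_alg_ideal smul I \<longleftrightarrow> module.subspace smul I \<and> (\<forall>a. \<forall>x\<in>I. a * x \<in> I \<and> x * a \<in> I)"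

text \<open>For submodules N \<subseteq> M, the quotient M/N is a finitely generated K-module iff there is a
  finite F \<subseteq> M with M \<subseteq> span F + N.\<close>
definition fg_quotient :: "('k::comm_ring_1 \<Rightarrow> 'a::ab_group_add \<Rightarrow> 'a) \<Rightarrow> 'a set \<Rightarrow> 'a set \<Rightarrow> bool" where
  "fg_quotient smul M N \<longleftrightarrow>
     (\<exists>F. finite F \<and> F \<subseteq> M \<and> (\<forall>m\<in>M. \<exists>s\<in>module.span smul F. \<exists>n\<in>N. m = s + n))"

end

theory Submission
  imports Defs
begin

lemma module_mult_self: "module ((*) :: 'k::comm_ring_1 \<Rightarrow> 'k \<Rightarrow> 'k)"
  by unfold_locales (auto simp: algebra_simps)

context module
begin

lemma fgq_trans:
  assumes "fg_quotient scale S T1" "fg_quotient scale T1 T" "T1 \<subseteq> S"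
  shows "fg_quotient scale S T"
proof -
  from assms(1) obtain F where F: "finite F" "F \<subseteq> S"
    "\<forall>m\<in>S. \<exists>s\<in>span F. \<exists>n\<in>T1. m = s + n" unfolding fg_quotient_def by blast
  from assms(2) obtain G where G: "finite G" "G \<subseteq> T1"
    "\<forall>m\<in>T1. \<exists>s\<in>span G. \<exists>n\<in>T. m = s + n" unfolding fg_quotient_def by blast
  show ?thesis unfolding fg_quotient_def
  proof (intro exI[of _ "F \<union> G"] conjI ballI)
    show "finite (F \<union> G)" using F(1) G(1) by simp
    show "F \<union> G \<subseteq> S" using F(2) G(2) assms(3) by blast
    fix m assume "m \<in> S"
    then obtain s n where s: "s \<in> span F" "n \<in> T1" "m = s + n" using F(3) by blast
    then obtain s' n' where s': "s' \<in> span G" "n' \<in> T" "n = s' + n'" using G(3) by blast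
    have "s + s' \<in> span (F \<union> G)"
      using span_add[OF subsetD[OF span_mono[OF Un_upper1] s(1)] subsetD[OF span_mono[OF Un_upper2] s'(1)]] .
    moreover have "m = (s + s') + n'" unfolding s(3) s'(3) by (simp add: add.assoc)
    ultimately show "\<exists>s\<in>span (F \<union> G). \<exists>n\<in>T. m = s + n" using s' by blast
  qed
qed

lemma fgq_mono:
  assumes "fg_quotient scale S T" "T \<subseteq> T'"
  shows "fg_quotient scale S T'"
proof -
  from assms(1) obtain F where "finite F" "F \<subseteq> S"
    "\<forall>m\<in>S. \<exists>s\<in>span F. \<exists>n\<in>T. m = s + n" unfolding fg_quotient_def by blast
  then show ?thesis unfolding fg_quotient_def using assms(2) by (intro exI[of _ F]) blast
qed

lemma fgq_preimage:
  assumes noeth: "noetherian_ring TYPE('a)"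
    and f: "module_hom scale scale f"
  shows "finite F \<Longrightarrow> subspace N \<Longrightarrow> subspace S \<Longrightarrow>
     f ` S \<subseteq> {u + n | u n. u \<in> span F \<and> n \<in> N} \<Longrightarrow> fg_quotient scale S {s\<in>S. f s \<in> N}"
proof (induction F arbitrary: N S rule: finite_induct)
  case empty
  show ?case unfolding fg_quotient_def
  proof (intro exI[of _ "{}"] conjI ballI)
    fix m assume "m \<in> S"
    then have "f m \<in> N" using empty by auto
    then show "\<exists>s\<in>span {}. \<exists>n\<in>{s \<in> S. f s \<in> N}. m = s + n" using \<open>m \<in> S\<close> by auto
  qed auto
next
  case (insert g F)
  interpret fh: module_hom scale scale f by (rule f)
  define N' where "N' = {scale k g + n | k n. n \<in> N}"
  have N': "subspace N'"
    unfolding subspace_def N'_def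
  proof (intro conjI ballI allI)
    show "0 \<in> {k *s g + n |k n. n \<in> N}"
      using subspace_0[OF insert(4)] by (intro CollectI exI[of _ 0]) auto
  next
    fix x y assume "x \<in> {k *s g + n |k n. n \<in> N}" "y \<in> {k *s g + n |k n. n \<in> N}"
    then obtain k n k' n' where "x = k *s g + n" "n \<in> N" "y = k' *s g + n'" "n' \<in> N" by blast
    then show "x + y \<in> {k *s g + n |k n. n \<in> N}"
      by (intro CollectI exI[of _ "k + k'"] exI[of _ "n + n'"])
        (auto simp: algebra_simps subspace_add[OF insert(4)])
  next
    fix c x assume "x \<in> {k *s g + n |k n. n \<in> N}"
    then obtain k n where "x = k *s g + n" "n \<in> N" by blast
    then show "c *s x \<in> {k *s g + n |k n. n \<in> N}"
      by (intro CollectI exI[of _ "c * k"] exI[of _ "c *s n"])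
        (auto simp: algebra_simps subspace_scale[OF insert(4)])
  qed
  have img: "f ` S \<subseteq> {u + n | u n. u \<in> span F \<and> n \<in> N'}"
  proof
    fix y assume "y \<in> f ` S"
    then obtain u n where un: "u \<in> span (insert g F)" "n \<in> N" "y = u + n" using insert(6) by blast
    then obtain k where k: "u - k *s g \<in> span F" using span_breakdown_eq by blast
    have "k *s g + n \<in> N'" unfolding N'_def using un by blast
    moreover have "y = (u - k *s g) + (k *s g + n)" using un by simp
    ultimately show "y \<in> {u + n | u n. u \<in> span F \<and> n \<in> N'}" using k by blast
  qed
  have IH: "fg_quotient scale S {s\<in>S. f s \<in> N'}"
    using insert.IH[OF N' insert(5) img] .
  define J where "J = {k. \<exists>s\<in>S. f s - k *s g \<in> N}"
  have J: "module.subspace ((*) :: 'a \<Rightarrow> 'a \<Rightarrow> 'a) J"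
    unfolding J_def
  proof (rule module.subspaceI[OF module_mult_self])
    show "(0::'a) \<in> {k. \<exists>s\<in>S. f s - k *s g \<in> N}"
      using subspace_0[OF insert(5)] subspace_0[OF insert(4)] by (auto intro!: bexI[of _ 0])
  next
    fix x y assume "x \<in> {k. \<exists>s\<in>S. f s - k *s g \<in> N}" "y \<in> {k. \<exists>s\<in>S. f s - k *s g \<in> N}"
    then obtain s s' where "s \<in> S" "f s - x *s g \<in> N" "s' \<in> S" "f s' - y *s g \<in> N" by blast
    moreover have "f (s + s') - (x + y) *s g = (f s - x *s g) + (f s' - y *s g)"
      by (simp add: fh.add algebra_simps)
    ultimately show "x + y \<in> {k. \<exists>s\<in>S. f s - k *s g \<in> N}"
      using subspace_add[OF insert(5), of s s'] subspace_add[OF insert(4), of "f s - x *s g" "f s' - y *s g"]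
      by (intro CollectI bexI[of _ "s + s'"]) auto
  next
    fix c x assume "x \<in> {k. \<exists>s\<in>S. f s - k *s g \<in> N}"
    then obtain s where "s \<in> S" "f s - x *s g \<in> N" by blast
    moreover have "f (c *s s) - (c * x) *s g = c *s (f s - x *s g)"
      by (simp add: fh.scale algebra_simps)
    ultimately show "c * x \<in> {k. \<exists>s\<in>S. f s - k *s g \<in> N}"
      using subspace_scale[OF insert(5), of s c] subspace_scale[OF insert(4), of "f s - x *s g" c]
      by (intro CollectI bexI[of _ "c *s s"]) auto
  qed
  from noeth J obtain H where H: "finite H" "module.span (*) H = J"
    unfolding noetherian_ring_def by blast
  define sel where "sel h = (SOME s. s \<in> S \<and> f s - h *s g \<in> N)" for h
  have sel: "sel h \<in> S \<and> f (sel h) - h *s g \<in> N" if "h \<in> H" for h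
  proof -
    have "h \<in> J" using that H module.span_superset[OF module_mult_self] by blast
    then have "\<exists>s. s \<in> S \<and> f s - h *s g \<in> N" unfolding J_def by blast
    then show ?thesis unfolding sel_def by (rule someI_ex)
  qed
  from IH obtain G where G: "finite G" "G \<subseteq> S"
    "\<forall>m\<in>S. \<exists>s\<in>span G. \<exists>n\<in>{s\<in>S. f s \<in> N'}. m = s + n" unfolding fg_quotient_def by blast
  show ?case unfolding fg_quotient_def
  proof (intro exI[of _ "G \<union> sel ` H"] conjI ballI)
    show "finite (G \<union> sel ` H)" using G(1) H(1) by simp
    show "G \<union> sel ` H \<subseteq> S" using G(2) sel by blast
    fix m assume "m \<in> S"
    then obtain u t where ut: "u \<in> span G" "t \<in> S" "f t \<in> N'" "m = u + t" using G(3) by blast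
    then obtain k n where kn: "f t = k *s g + n" "n \<in> N" unfolding N'_def by blast
    have "k \<in> J" unfolding J_def using ut kn by (intro CollectI bexI[of _ t]) auto
    then have "k \<in> range (\<lambda>u. \<Sum>v\<in>H. u v * v)"
      using H(2) module.span_finite[OF module_mult_self H(1)] by simp
    then obtain c where c: "k = (\<Sum>h\<in>H. c h * h)" by blast
    define v where "v = (\<Sum>h\<in>H. c h *s sel h)"
    have vS: "v \<in> S" unfolding v_def
      using sel by (intro subspace_sum[OF insert(5)] subspace_scale[OF insert(5)]) auto
    have vspan: "v \<in> span (G \<union> sel ` H)" unfolding v_def
      by (intro span_sum span_scale span_base) auto
    have e1: "f v = (\<Sum>h\<in>H. c h *s f (sel h))" unfolding v_def by (simp add: fh.sum fh.scale)
    have e2: "k *s g = (\<Sum>h\<in>H. c h *s (h *s g))" unfolding c by (simp add: scale_sum_left)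
    have "f v - k *s g = (\<Sum>h\<in>H. c h *s (f (sel h) - h *s g))"
      unfolding e1 e2 scale_right_diff_distrib sum_subtractf ..
    also have "\<dots> \<in> N" using sel by (intro subspace_sum[OF insert(4)] subspace_scale[OF insert(4)]) auto
    finally have fvN: "f v - k *s g \<in> N" .
    have e3: "f (t - v) = n - (f v - k *s g)" unfolding fh.diff kn(1) by (simp add: algebra_simps)
    have "n - (f v - k *s g) \<in> N" by (rule subspace_diff[OF insert(4) kn(2) fvN])
    then have "f (t - v) \<in> N" unfolding e3 .
    moreover have "t - v \<in> S" using subspace_diff[OF insert(5) ut(2) vS] .
    moreover have "u + v \<in> span (G \<union> sel ` H)"
      using span_add[OF subsetD[OF span_mono[OF Un_upper1] ut(1)] vspan] .
    moreover have "m = (u + v) + (t - v)" using ut by simp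
    ultimately show "\<exists>s\<in>span (G \<union> sel ` H). \<exists>n\<in>{s\<in>S. f s \<in> N}. m = s + n" by blast
  qed
qed

lemma fgq_refl: "fg_quotient scale S S"
  unfolding fg_quotient_def
proof (intro exI[of _ "{}"] conjI ballI)
  fix m assume "m \<in> S"
  then show "\<exists>s\<in>span {}. \<exists>n\<in>S. m = s + n" by (intro bexI[of _ 0] bexI[of _ m]) auto
qed auto

lemma fgq_preimages:
  assumes noeth: "noetherian_ring TYPE('a)"
    and N: "subspace N" and F: "finite F"
    and cov: "\<forall>m. \<exists>u\<in>span F. \<exists>n\<in>N. m = u + n"
  shows "finite \<Phi> \<Longrightarrow> \<forall>\<phi>\<in>\<Phi>. module_hom scale scale \<phi> \<Longrightarrow> subspace S \<Longrightarrow>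
    fg_quotient scale S {s\<in>S. \<forall>\<phi>\<in>\<Phi>. \<phi> s \<in> N}"
proof (induction \<Phi> arbitrary: S rule: finite_induct)
  case empty
  then show ?case using fgq_refl by simp
next
  case (insert \<phi> \<Phi>)
  have h: "module_hom scale scale \<phi>" using insert.prems(1) by simp
  have img: "\<phi> ` S \<subseteq> {u + n | u n. u \<in> span F \<and> n \<in> N}" using cov by blast
  have T1: "fg_quotient scale S {s\<in>S. \<phi> s \<in> N}"
    by (rule fgq_preimage[OF noeth h F N insert.prems(2) img])
  have sub: "subspace {s\<in>S. \<phi> s \<in> N}"
  proof -
    have "subspace {x. \<phi> x \<in> N}"
      using module_hom.subspace_linear_preimage[OF h N] .
    then have "subspace (S \<inter> {x. \<phi> x \<in> N})" using subspace_inter insert.prems(2) by blast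
    moreover have "S \<inter> {x. \<phi> x \<in> N} = {s\<in>S. \<phi> s \<in> N}" by blast
    ultimately show ?thesis by simp
  qed
  have IH: "fg_quotient scale {s\<in>S. \<phi> s \<in> N} {s\<in>{s\<in>S. \<phi> s \<in> N}. \<forall>\<psi>\<in>\<Phi>. \<psi> s \<in> N}"
    using insert.IH[OF _ sub] insert.prems(1) by simp
  have eq: "{s\<in>{s\<in>S. \<phi> s \<in> N}. \<forall>\<psi>\<in>\<Phi>. \<psi> s \<in> N} = {s\<in>S. \<forall>\<psi>\<in>insert \<phi> \<Phi>. \<psi> s \<in> N}"
    by auto
  show ?case using fgq_trans[OF T1 IH] eq by auto
qed

lemma hom_span_into:
  assumes "module_hom scale scale g" "subspace B" "\<forall>u\<in>F. g u \<in> B" "u \<in> span F"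
  shows "g u \<in> B"
proof -
  have "span F \<subseteq> {x. g x \<in> B}"
    using span_minimal[of F "{x. g x \<in> B}"] module_hom.subspace_linear_preimage[OF assms(1,2)] assms(3)
    by blast
  then show ?thesis using assms(4) by blast
qed

end

lemma hom_left:
  assumes "k_algebra smul" shows "module_hom smul smul (\<lambda>x::'a::ring. a * x)"
proof -
  have A: "\<forall>c x y. smul c (x * y) = x * smul c y" and M: "module smul"
    using assms unfolding k_algebra_def by blast+
  show ?thesis unfolding module_hom_iff using A M by (simp add: distrib_left)
qed

lemma hom_right:
  assumes "k_algebra smul" shows "module_hom smul smul (\<lambda>x::'a::ring. x * a)"
proof -
  have A: "\<forall>c x y. smul c (x * y) = smul c x * y" and M: "module smul"
    using assms unfolding k_algebra_def by blast+
  show ?thesis unfolding module_hom_iff using A M by (simp add: distrib_right)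
qed

lemma hom_sand:
  assumes "k_algebra smul" shows "module_hom smul smul (\<lambda>x::'a::ring. a * x * b)"
proof -
  have A: "\<forall>c x y. smul c (x * y) = smul c x * y" and A2: "\<forall>c x y. smul c (x * y) = x * smul c y"
    and M: "module smul"
    using assms unfolding k_algebra_def by blast+
  have "smul c (a * x * b) = a * smul c x * b" for c x
    using A A2 by metis
  then show ?thesis unfolding module_hom_iff using M by (simp add: distrib_right distrib_left)
qed

theorem lemma2p1:
  fixes smul :: "'k::comm_ring_1 \<Rightarrow> 'a::ring \<Rightarrow> 'a"
    and B :: "'a set"
  assumes "noetherian_ring TYPE('k)"
    and "k_algebra smul"
    and "k_subalgebra smul B"
    and "fg_quotient smul UNIV B"
  shows "\<exists>I. I \<subseteq> B \<and> k_alg_ideal smul I \<and> fg_quotient smul B I \<and> fg_quotient smul UNIV I"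
proof -
  have md: "module smul" using assms(2) unfolding k_algebra_def by blast
  interpret m: module smul by (rule md)
  have alg: "\<And>c x y. smul c (x * y) = smul c x * y" "\<And>c x y. smul c (x * y) = x * smul c y"
    using assms(2) unfolding k_algebra_def by blast+
  have Bs: "m.subspace B" and Bm: "\<And>x y. x \<in> B \<Longrightarrow> y \<in> B \<Longrightarrow> x * y \<in> B"
    using assms(3) unfolding k_subalgebra_def by auto
  obtain F where F: "finite F" "\<forall>m. \<exists>u\<in>m.span F. \<exists>n\<in>B. m = u + n"
    using assms(4) unfolding fg_quotient_def by blast
  define \<Phi> where "\<Phi> = (\<lambda>a x. a * x) ` F \<union> (\<lambda>a x. x * a) ` F \<union> (\<lambda>(a, b) x. a * x * b) ` (F \<times> F)"
  have finPhi: "finite \<Phi>" unfolding \<Phi>_def using F(1) by simp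
  have homPhi: "\<forall>\<phi>\<in>\<Phi>. module_hom smul smul \<phi>"
    unfolding \<Phi>_def using hom_left[OF assms(2)] hom_right[OF assms(2)] hom_sand[OF assms(2)] by auto
  define I where "I = {s\<in>B. \<forall>\<phi>\<in>\<Phi>. \<phi> s \<in> B}"
  define I' where "I' = {x\<in>B. \<forall>a b. a * x \<in> B \<and> x * a \<in> B \<and> a * x * b \<in> B}"
  have fgI: "fg_quotient smul B I"
    unfolding I_def by (rule m.fgq_preimages[OF assms(1) Bs F(1) F(2) finPhi homPhi Bs])
  have key: "x \<in> I'" if x: "x \<in> I" for x
  proof -
    have xB: "x \<in> B" using x unfolding I_def by blast
    have xl: "u * x \<in> B" if "u \<in> F" for u
    proof -
      have "(\<lambda>y. u * y) \<in> \<Phi>" unfolding \<Phi>_def using that by blast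
      moreover have "\<forall>\<phi>\<in>\<Phi>. \<phi> x \<in> B" using x unfolding I_def by blast
      ultimately have "(\<lambda>y. u * y) x \<in> B" by (rule bspec[rotated])
      then show ?thesis by simp
    qed
    have xr: "x * u \<in> B" if "u \<in> F" for u
    proof -
      have "(\<lambda>y. y * u) \<in> \<Phi>" unfolding \<Phi>_def using that by blast
      moreover have "\<forall>\<phi>\<in>\<Phi>. \<phi> x \<in> B" using x unfolding I_def by blast
      ultimately have "(\<lambda>y. y * u) x \<in> B" by (rule bspec[rotated])
      then show ?thesis by simp
    qed
    have xs: "u * x * v \<in> B" if "u \<in> F" "v \<in> F" for u v
    proof -
      have "(\<lambda>(a, b) x. a * x * b) (u, v) \<in> \<Phi>" unfolding \<Phi>_def using that by blast
      then show ?thesis using x unfolding I_def by fastforce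
    qed
    have sl: "u * x \<in> B" if "u \<in> m.span F" for u
      using m.hom_span_into[OF hom_right[OF assms(2)] Bs _ that] xl by blast
    have sr: "x * u \<in> B" if "u \<in> m.span F" for u
      using m.hom_span_into[OF hom_left[OF assms(2)] Bs _ that] xr by blast
    have ss: "u * x * v \<in> B" if "u \<in> m.span F" "v \<in> m.span F" for u v
    proof -
      have "u' * x * v \<in> B" if "u' \<in> F" for u'
        using m.hom_span_into[OF hom_left[OF assms(2)] Bs _ \<open>v \<in> m.span F\<close>, of "u' * x"] xs[OF that]
        by blast
      then have "\<forall>u'\<in>F. u' * (x * v) \<in> B" by (simp add: mult.assoc)
      then have "u * (x * v) \<in> B"
        using m.hom_span_into[OF hom_right[OF assms(2)] Bs _ \<open>u \<in> m.span F\<close>, of "x * v"] by blast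
      then show ?thesis by (simp add: mult.assoc)
    qed
    have "a * x \<in> B \<and> x * a \<in> B \<and> a * x * b \<in> B" for a b
    proof -
      obtain u c where uc: "u \<in> m.span F" "c \<in> B" "a = u + c" using F(2) by blast
      obtain v d where vd: "v \<in> m.span F" "d \<in> B" "b = v + d" using F(2) by blast
      have "a * x = u * x + c * x" using uc by (simp add: distrib_right)
      moreover have "u * x + c * x \<in> B" using m.subspace_add[OF Bs sl[OF uc(1)] Bm[OF uc(2) xB]] .
      moreover have "x * a = x * u + x * c" using uc by (simp add: distrib_left)
      moreover have "x * u + x * c \<in> B" using m.subspace_add[OF Bs sr[OF uc(1)] Bm[OF xB uc(2)]] .
      moreover have "a * x * b = (u * x * v + (u * x) * d) + (c * (x * v) + c * x * d)"
        using uc vd by (simp add: distrib_right distrib_left mult.assoc add.assoc)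
      moreover have "(u * x * v + (u * x) * d) + (c * (x * v) + c * x * d) \<in> B"
        by (intro m.subspace_add[OF Bs] ss uc vd Bm sl sr xB)
      ultimately show ?thesis by simp
    qed
    then show ?thesis unfolding I'_def using xB by blast
  qed
  have II': "I = I'"
  proof
    show "I \<subseteq> I'" using key by blast
    show "I' \<subseteq> I" unfolding I'_def I_def \<Phi>_def by auto
  qed
  have IB: "I \<subseteq> B" unfolding I_def by blast
  have idl: "k_alg_ideal smul I'"
    unfolding k_alg_ideal_def
  proof (intro conjI allI ballI)
    show "m.subspace I'"
    proof (rule m.subspaceI)
      show "0 \<in> I'" unfolding I'_def using m.subspace_0[OF Bs] by simp
    next
      fix x y assume "x \<in> I'" "y \<in> I'"
      then show "x + y \<in> I'" unfolding I'_def
        using m.subspace_add[OF Bs] by (simp add: distrib_left distrib_right)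
    next
      fix c x assume "x \<in> I'"
      then show "smul c x \<in> I'" unfolding I'_def
        using m.subspace_scale[OF Bs] by (simp add: alg(1)[symmetric] alg(2)[symmetric])
    qed
  next
    fix a x assume x: "x \<in> I'"
    have x1: "\<And>a. a * x \<in> B" and x2: "\<And>a. x * a \<in> B" and x3: "\<And>a b. a * x * b \<in> B"
      using x unfolding I'_def by auto
    show "a * x \<in> I'" unfolding I'_def
      using x1 x3 by (simp add: mult.assoc[symmetric])
    show "x * a \<in> I'" unfolding I'_def
      using x2 x3 by (simp add: mult.assoc[symmetric]) (metis mult.assoc)
  qed
  have fgU: "fg_quotient smul UNIV I"
    using m.fgq_trans[OF assms(4) fgI] by simp
  show ?thesis using IB idl fgI fgU II' by blast
qed

end
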